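(* Let $\alpha,\beta,r:\mathbb{Z}\to\mathbb{R}$ with $\beta(t)\neq0$ for all $t\in\mathbb{Z}$, and fix $a\in\mathbb{Z}$. Let $y_1,y_2$ satisfy $y_i(t+2)+\alpha(t)y_i(t+1)+\beta(t)y_i(t)=0$ ($i=1,2$) with $W(t):=y_1(t)y_2(t+1)-y_2(t)y_1(t+1)\neq0$. Then the general solution of $$y(t+2)+\alpha(t)y(t+1)+\beta(t)y(t)=r(t),\qquad t\in\mathbb{Z},$$ is $$y(t)=c_1y_1(t)+c_2y_2(t)+y_1(t)\sum\frac{\prod_{j=a}^{t-1}\beta(j)\sum\frac{r(t)y_1(t+1)}{\prod_{j=a}^{t}\beta(j)}}{y_1(t)y_1(t+1)}$$ or $$y(t)=c_1y_1(t)+c_2y_2(t)+y_2(t)\sum\frac{\prod_{j=a}^{t-1}\beta(j)\sum\frac{r(t)y_2(t+1)}{\prod_{j=a}^{t}\beta(j)}}{y_2(t)y_2(t+1)},$$ where $c_1,c_2$ are arbitrary constants.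
   Context: $\sum f(t)$ denotes an indefinite sum with respect to $t$, i.e. any function $F$ with $F(t+1)-F(t)=f(t)$. *)

theory Defs
  imports Complex_Main
begin

definition lin_diff_sol :: "(int \<Rightarrow> real) \<Rightarrow> (int \<Rightarrow> real) \<Rightarrow> (int \<Rightarrow> real) \<Rightarrow> (int \<Rightarrow> real) \<Rightarrow> bool" where
  "lin_diff_sol \<alpha> \<beta> r y \<longleftrightarrow> (\<forall>t. y (t + 2) + \<alpha> t * y (t + 1) + \<beta> t * y t = r t)"

definition indef_sum :: "(int \<Rightarrow> real) \<Rightarrow> (int \<Rightarrow> real) \<Rightarrow> bool" where
  "indef_sum f F \<longleftrightarrow> (\<forall>t. F (t + 1) - F t = f t)"

text \<open>Discrete product prod_{j=a}^{t-1} beta(j), with the standard convention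
  for t < a: it equals 1 / prod_{j=t}^{a-1} beta(j); so dprod beta a a = 1 and
  dprod beta a (t+1) = beta t * dprod beta a t for all t.\<close>
definition dprod :: "(int \<Rightarrow> real) \<Rightarrow> int \<Rightarrow> int \<Rightarrow> real" where
  "dprod \<beta> a t = (if a \<le> t then (\<Prod>j\<in>{a..<t}. \<beta> j) else 1 / (\<Prod>j\<in>{t..<a}. \<beta> j))"

end

theory Submission
  imports Defs
begin

lemma dprod_step:
  assumes "\<forall>t. \<beta> t \<noteq> 0"
  shows "dprod \<beta> a (t + 1) = \<beta> t * dprod \<beta> a t"
proof (cases "a \<le> t")
  case True
  have "{a..<t+1} = insert t {a..<t}" using True by auto
  then show ?thesis using True by (simp add: dprod_def mult.commute)
next
  case False
  have e: "{t..<a} = insert t {t+1..<a}" using False by auto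
  show ?thesis
  proof (cases "a = t + 1")
    case True
    have "{t..<t+1} = {t}" by auto
    then show ?thesis using False assms True by (simp add: dprod_def)
  next
    case F2: False
    then show ?thesis using False e assms by (simp add: dprod_def field_simps)
  qed
qed

lemma dprod_nz:
  assumes "\<forall>t. \<beta> t \<noteq> 0"
  shows "dprod \<beta> a t \<noteq> 0"
  using assms by (simp add: dprod_def prod_zero_iff)

lemma key:
  fixes \<alpha> \<beta> r z u P :: "int \<Rightarrow> real"
  assumes b: "\<forall>t. \<beta> t \<noteq> 0"
    and z: "lin_diff_sol \<alpha> \<beta> (\<lambda>_. 0) z"
    and znz: "\<forall>t. z t \<noteq> 0"
    and Ps: "\<And>t. P (t + 1) = \<beta> t * P t"
    and Pnz: "\<And>t. P t \<noteq> 0"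
  shows "lin_diff_sol \<alpha> \<beta> r (\<lambda>t. z t * u t) \<longleftrightarrow>
     (\<exists>H. indef_sum (\<lambda>t. r t * z (t + 1) / P (t + 1)) H \<and>
          indef_sum (\<lambda>t. P t * H t / (z t * z (t + 1))) u)"
proof -
  have zh: "z (t+2) = - \<alpha> t * z (t+1) - \<beta> t * z t" for t
    using z unfolding lin_diff_sol_def by (simp add: algebra_simps) (metis add.commute add_eq_0_iff2 add.left_commute)
  have E: "z (t+2) * u (t+2) + \<alpha> t * (z (t+1) * u (t+1)) + \<beta> t * (z t * u t)
      = z (t+2) * (u (t+2) - u (t+1)) - \<beta> t * z t * (u (t+1) - u t)" for t
    unfolding zh[of t] by (simp add: algebra_simps)
  have t2: "t + 1 + 1 = t + (2::int)" for t by simp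
  show ?thesis
  proof
    assume L: "lin_diff_sol \<alpha> \<beta> r (\<lambda>t. z t * u t)"
    define H where "H t = (u (t+1) - u t) * z t * z (t+1) / P t" for t
    have 1: "indef_sum (\<lambda>t. P t * H t / (z t * z (t + 1))) u"
      unfolding indef_sum_def H_def
    proof
      fix t
      have "z t \<noteq> 0" "z (t+1) \<noteq> 0" "P t \<noteq> 0" using znz Pnz by auto
      then show "u (t + 1) - u t = P t * ((u (t + 1) - u t) * z t * z (t + 1) / P t) / (z t * z (t + 1))"
        by simp
    qed
    have "H (t+1) - H t = r t * z (t + 1) / P (t + 1)" for t
    proof -
      have rt: "r t = z (t+2) * (u (t+2) - u (t+1)) - \<beta> t * z t * (u (t+1) - u t)"
        using L E[of t] unfolding lin_diff_sol_def by metis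
      have "z t \<noteq> 0" "z (t+1) \<noteq> 0" "P t \<noteq> 0" "\<beta> t \<noteq> 0" using znz Pnz b by auto
      then show ?thesis unfolding H_def rt Ps t2
        by (simp add: field_simps)
    qed
    then show "\<exists>H. indef_sum (\<lambda>t. r t * z (t + 1) / P (t + 1)) H \<and>
          indef_sum (\<lambda>t. P t * H t / (z t * z (t + 1))) u"
      using 1 unfolding indef_sum_def by blast
  next
    assume "\<exists>H. indef_sum (\<lambda>t. r t * z (t + 1) / P (t + 1)) H \<and>
          indef_sum (\<lambda>t. P t * H t / (z t * z (t + 1))) u"
    then obtain H where H: "\<And>t. H (t+1) - H t = r t * z (t + 1) / P (t + 1)"
      and U: "\<And>t. u (t+1) - u t = P t * H t / (z t * z (t + 1))"
      unfolding indef_sum_def by blast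
    show "lin_diff_sol \<alpha> \<beta> r (\<lambda>t. z t * u t)"
      unfolding lin_diff_sol_def
    proof
      fix t
      have U2: "u (t+2) - u (t+1) = P (t+1) * H (t+1) / (z (t+1) * z (t + 2))"
        using U[of "t+1"] by (simp add: t2)
      have "r t = (H (t+1) - H t) * P (t+1) / z (t+1)"
        using H[of t] znz Pnz[of "t+1"] by (simp add: field_simps)
      also have "\<dots> = z (t+2) * (u (t+2) - u (t+1)) - \<beta> t * z t * (u (t+1) - u t)"
        using znz[rule_format, of t] znz[rule_format, of "t+1"] znz[rule_format, of "t+2"] Pnz[of t] b[rule_format, of t]
        unfolding U2 U Ps by (simp add: field_simps)
      finally show "z (t+2) * u (t+2) + \<alpha> t * (z (t+1) * u (t+1)) + \<beta> t * (z t * u t) = r t"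
        using E[of t] by simp
    qed
  qed
qed

lemma lin_shift:
  assumes "lin_diff_sol \<alpha> \<beta> (\<lambda>_. 0) y1" "lin_diff_sol \<alpha> \<beta> (\<lambda>_. 0) y2"
  shows "lin_diff_sol \<alpha> \<beta> r (\<lambda>t. c1 * y1 t + c2 * y2 t + w t) \<longleftrightarrow> lin_diff_sol \<alpha> \<beta> r w"
proof -
  have e: "(c1 * y1 (t+2) + c2 * y2 (t+2) + w (t+2)) + \<alpha> t * (c1 * y1 (t+1) + c2 * y2 (t+1) + w (t+1))
     + \<beta> t * (c1 * y1 t + c2 * y2 t + w t) = w (t+2) + \<alpha> t * w (t+1) + \<beta> t * w t" for t
  proof -
    have a1: "y1 (t+2) + \<alpha> t * y1 (t+1) + \<beta> t * y1 t = 0"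
      and a2: "y2 (t+2) + \<alpha> t * y2 (t+1) + \<beta> t * y2 t = 0"
      using assms unfolding lin_diff_sol_def by auto
    have "(c1 * y1 (t+2) + c2 * y2 (t+2) + w (t+2)) + \<alpha> t * (c1 * y1 (t+1) + c2 * y2 (t+1) + w (t+1))
     + \<beta> t * (c1 * y1 t + c2 * y2 t + w t) = w (t+2) + \<alpha> t * w (t+1) + \<beta> t * w t
       + c1 * (y1 (t+2) + \<alpha> t * y1 (t+1) + \<beta> t * y1 t) + c2 * (y2 (t+2) + \<alpha> t * y2 (t+1) + \<beta> t * y2 t)"
      by (simp add: algebra_simps)
    then show ?thesis using a1 a2 by simp
  qed
  show ?thesis unfolding lin_diff_sol_def by (simp only: e)
qed

lemma part:
  fixes \<alpha> \<beta> r y1 y2 z :: "int \<Rightarrow> real" and a :: int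
  assumes b: "\<forall>t. \<beta> t \<noteq> 0"
    and h1: "lin_diff_sol \<alpha> \<beta> (\<lambda>_. 0) y1"
    and h2: "lin_diff_sol \<alpha> \<beta> (\<lambda>_. 0) y2"
    and hz: "lin_diff_sol \<alpha> \<beta> (\<lambda>_. 0) z"
    and znz: "\<forall>t. z t \<noteq> 0"
  shows "lin_diff_sol \<alpha> \<beta> r y \<longleftrightarrow>
              (\<exists>c1 c2 H G.
                 indef_sum (\<lambda>t. r t * z (t + 1) / dprod \<beta> a (t + 1)) H \<and>
                 indef_sum (\<lambda>t. dprod \<beta> a t * H t / (z t * z (t + 1))) G \<and>
                 (\<forall>t. y t = c1 * y1 t + c2 * y2 t + z t * G t))"
  (is "?L \<longleftrightarrow> ?R")
proof
  note K = key[OF b hz znz dprod_step[OF b, of a] dprod_nz[OF b, of a]]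
  assume ?L
  have ye: "y = (\<lambda>t. z t * (y t / z t))" using znz by auto
  have "lin_diff_sol \<alpha> \<beta> r (\<lambda>t. z t * (y t / z t))" using \<open>?L\<close> ye by simp
  then obtain H where "indef_sum (\<lambda>t. r t * z (t + 1) / dprod \<beta> a (t + 1)) H"
    "indef_sum (\<lambda>t. dprod \<beta> a t * H t / (z t * z (t + 1))) (\<lambda>t. y t / z t)"
    using iffD1[OF K[of r "\<lambda>t. y t / z t"]] by blast
  moreover have "\<forall>t. y t = 0 * y1 t + 0 * y2 t + z t * (y t / z t)" using znz by simp
  ultimately show ?R by (intro exI conjI)
next
  note K = key[OF b hz znz dprod_step[OF b, of a] dprod_nz[OF b, of a]]
  assume ?R
  then obtain c1 c2 H G where HG: "indef_sum (\<lambda>t. r t * z (t + 1) / dprod \<beta> a (t + 1)) H"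
    "indef_sum (\<lambda>t. dprod \<beta> a t * H t / (z t * z (t + 1))) G"
    and ye: "\<forall>t. y t = c1 * y1 t + c2 * y2 t + z t * G t" by blast
  have "lin_diff_sol \<alpha> \<beta> r (\<lambda>t. z t * G t)" using K[of r G] HG by (intro iffD2[OF K[of r G]] exI conjI)
  then have "lin_diff_sol \<alpha> \<beta> r (\<lambda>t. c1 * y1 t + c2 * y2 t + z t * G t)"
    using lin_shift[OF h1 h2, of r c1 c2 "\<lambda>t. z t * G t"] by simp
  moreover have "y = (\<lambda>t. c1 * y1 t + c2 * y2 t + z t * G t)" using ye by auto
  ultimately show ?L by simp
qed

theorem theorem4p2:
  fixes \<alpha> \<beta> r y1 y2 :: "int \<Rightarrow> real" and a :: int
  assumes "\<forall>t. \<beta> t \<noteq> 0"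
    and "lin_diff_sol \<alpha> \<beta> (\<lambda>_. 0) y1"
    and "lin_diff_sol \<alpha> \<beta> (\<lambda>_. 0) y2"
    and "\<forall>t. y1 t * y2 (t + 1) - y2 t * y1 (t + 1) \<noteq> 0"
  shows "((\<forall>t. y1 t \<noteq> 0) \<longrightarrow>
           (\<forall>y. lin_diff_sol \<alpha> \<beta> r y \<longleftrightarrow>
              (\<exists>c1 c2 H G.
                 indef_sum (\<lambda>t. r t * y1 (t + 1) / dprod \<beta> a (t + 1)) H \<and>
                 indef_sum (\<lambda>t. dprod \<beta> a t * H t / (y1 t * y1 (t + 1))) G \<and>
                 (\<forall>t. y t = c1 * y1 t + c2 * y2 t + y1 t * G t))))
       \<and> ((\<forall>t. y2 t \<noteq> 0) \<longrightarrow>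
           (\<forall>y. lin_diff_sol \<alpha> \<beta> r y \<longleftrightarrow>
              (\<exists>c1 c2 H G.
                 indef_sum (\<lambda>t. r t * y2 (t + 1) / dprod \<beta> a (t + 1)) H \<and>
                 indef_sum (\<lambda>t. dprod \<beta> a t * H t / (y2 t * y2 (t + 1))) G \<and>
                 (\<forall>t. y t = c1 * y1 t + c2 * y2 t + y2 t * G t))))"
  using part[OF assms(1,2,3,2)] part[OF assms(1,2,3,3)] by blast

end
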